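(* Let $G$ be a group and $\preceq$ a left-ordering on $G$. Then $\preceq$ is Conradian if and only if the action of $G$ on the totally ordered set $(G,\preceq)$ by left translations admits no crossing.
   Context: A left-ordering on a group $G$ is a total order $\preceq$ with $f\prec g\Rightarrow hf\prec hg$ for all $f,g,h\in G$. It is Conradian if for all $f\succ id$ and $g\succ id$ there is $n\in\mathbb{N}$ with $fg^n\succ g$. If $G$ acts by order-preserving bijections on a totally ordered set $(\Omega,\le)$, a crossing for the action is a 5-tuple $(f,g,u,v,w)$ with $f,g\in G$ and $u,v,w\in\Omega$ such that: (i) $u<w<v$; (ii) for every $n\in\mathbb{N}$, $g^n u<v$ and $f^n v>u$; (iii) there exist $M,N\in\mathbb{N}$ with $f^N v<w<g^M u$. The left translation action is $g\cdot h=gh$. *)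

theory Defs
  imports "HOL-Algebra.Group"
begin

definition left_ordering :: "('a, 'b) monoid_scheme \<Rightarrow> ('a \<Rightarrow> 'a \<Rightarrow> bool) \<Rightarrow> bool" where
  "left_ordering G r \<longleftrightarrow>
     (\<forall>x\<in>carrier G. r x x) \<and>
     (\<forall>x\<in>carrier G. \<forall>y\<in>carrier G. r x y \<and> r y x \<longrightarrow> x = y) \<and>
     (\<forall>x\<in>carrier G. \<forall>y\<in>carrier G. \<forall>z\<in>carrier G. r x y \<and> r y z \<longrightarrow> r x z) \<and>
     (\<forall>x\<in>carrier G. \<forall>y\<in>carrier G. r x y \<or> r y x) \<and>
     (\<forall>f\<in>carrier G. \<forall>g\<in>carrier G. \<forall>h\<in>carrier G.
        r f g \<and> f \<noteq> g \<longrightarrow> r (h \<otimes>\<^bsub>G\<^esub> f) (h \<otimes>\<^bsub>G\<^esub> g) \<and> h \<otimes>\<^bsub>G\<^esub> f \<noteq> h \<otimes>\<^bsub>G\<^esub> g)"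

definition strict :: "('a \<Rightarrow> 'a \<Rightarrow> bool) \<Rightarrow> 'a \<Rightarrow> 'a \<Rightarrow> bool" where
  "strict r x y \<longleftrightarrow> r x y \<and> x \<noteq> y"

definition conradian :: "('a, 'b) monoid_scheme \<Rightarrow> ('a \<Rightarrow> 'a \<Rightarrow> bool) \<Rightarrow> bool" where
  "conradian G r \<longleftrightarrow>
     (\<forall>f\<in>carrier G. \<forall>g\<in>carrier G.
        strict r \<one>\<^bsub>G\<^esub> f \<and> strict r \<one>\<^bsub>G\<^esub> g \<longrightarrow>
        (\<exists>n::nat. n \<ge> 1 \<and> strict r g (f \<otimes>\<^bsub>G\<^esub> (g [^]\<^bsub>G\<^esub> n))))"

definition crossing ::
  "('a, 'b) monoid_scheme \<Rightarrow> 'c set \<Rightarrow> ('c \<Rightarrow> 'c \<Rightarrow> bool) \<Rightarrow> ('a \<Rightarrow> 'c \<Rightarrow> 'c)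
     \<Rightarrow> 'a \<Rightarrow> 'a \<Rightarrow> 'c \<Rightarrow> 'c \<Rightarrow> 'c \<Rightarrow> bool" where
  "crossing G Omega lt act f g u v w \<longleftrightarrow>
     f \<in> carrier G \<and> g \<in> carrier G \<and> u \<in> Omega \<and> v \<in> Omega \<and> w \<in> Omega \<and>
     lt u w \<and> lt w v \<and>
     (\<forall>n::nat. lt (act (g [^]\<^bsub>G\<^esub> n) u) v \<and> lt u (act (f [^]\<^bsub>G\<^esub> n) v)) \<and>
     (\<exists>(M::nat) (N::nat). lt (act (f [^]\<^bsub>G\<^esub> N) v) w \<and> lt w (act (g [^]\<^bsub>G\<^esub> M) u))"

definition admits_crossing ::
  "('a, 'b) monoid_scheme \<Rightarrow> 'c set \<Rightarrow> ('c \<Rightarrow> 'c \<Rightarrow> bool) \<Rightarrow> ('a \<Rightarrow> 'c \<Rightarrow> 'c) \<Rightarrow> bool" where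
  "admits_crossing G Omega lt act \<longleftrightarrow>
     (\<exists>f g u v w. crossing G Omega lt act f g u v w)"

end

theory Submission
  imports Defs
begin

locale lord = group G for G (structure) + fixes r :: "'a \<Rightarrow> 'a \<Rightarrow> bool"
  assumes lo: "left_ordering G r"
begin

abbreviation "s \<equiv> strict r"

lemma rrefl: "x \<in> carrier G \<Longrightarrow> r x x"
  using lo unfolding left_ordering_def by blast
lemma rantisym: "x \<in> carrier G \<Longrightarrow> y \<in> carrier G \<Longrightarrow> r x y \<Longrightarrow> r y x \<Longrightarrow> x = y"
  using lo unfolding left_ordering_def by blast
lemma rtrans: "x \<in> carrier G \<Longrightarrow> y \<in> carrier G \<Longrightarrow> z \<in> carrier G \<Longrightarrow> r x y \<Longrightarrow> r y z \<Longrightarrow> r x z"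
  using lo unfolding left_ordering_def by blast
lemma rtotal: "x \<in> carrier G \<Longrightarrow> y \<in> carrier G \<Longrightarrow> r x y \<or> r y x"
  using lo unfolding left_ordering_def by blast
lemma sinv: "a \<in> carrier G \<Longrightarrow> b \<in> carrier G \<Longrightarrow> h \<in> carrier G \<Longrightarrow> s a b \<Longrightarrow> s (h \<otimes> a) (h \<otimes> b)"
  using lo unfolding left_ordering_def strict_def by blast

lemma lcanc[simp]: "h \<in> carrier G \<Longrightarrow> a \<in> carrier G \<Longrightarrow> inv h \<otimes> (h \<otimes> a) = a"
  by (metis m_assoc inv_closed l_inv l_one)
lemma rcanc[simp]: "h \<in> carrier G \<Longrightarrow> a \<in> carrier G \<Longrightarrow> h \<otimes> (inv h \<otimes> a) = a"
  by (metis m_assoc inv_closed r_inv l_one)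

lemma scancel: assumes "a \<in> carrier G" "b \<in> carrier G" "h \<in> carrier G" "s (h \<otimes> a) (h \<otimes> b)"
  shows "s a b"
proof -
  have "s (inv h \<otimes> (h \<otimes> a)) (inv h \<otimes> (h \<otimes> b))" by (rule sinv) (use assms in auto)
  moreover have "inv h \<otimes> (h \<otimes> a) = a" "inv h \<otimes> (h \<otimes> b) = b" using assms by simp_all
  ultimately show ?thesis by simp
qed

lemma strans: "a \<in> carrier G \<Longrightarrow> b \<in> carrier G \<Longrightarrow> c \<in> carrier G \<Longrightarrow> s a b \<Longrightarrow> s b c \<Longrightarrow> s a c"
  unfolding strict_def using rtrans rantisym by metis
lemma srtrans: "a \<in> carrier G \<Longrightarrow> b \<in> carrier G \<Longrightarrow> c \<in> carrier G \<Longrightarrow> s a b \<Longrightarrow> r b c \<Longrightarrow> s a c"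
  unfolding strict_def using rtrans rantisym by metis
lemma rstrans: "a \<in> carrier G \<Longrightarrow> b \<in> carrier G \<Longrightarrow> c \<in> carrier G \<Longrightarrow> r a b \<Longrightarrow> s b c \<Longrightarrow> s a c"
  unfolding strict_def using rtrans rantisym by metis
lemma sasym: "a \<in> carrier G \<Longrightarrow> b \<in> carrier G \<Longrightarrow> s a b \<Longrightarrow> \<not> s b a"
  unfolding strict_def using rantisym by metis
lemma nots: "a \<in> carrier G \<Longrightarrow> b \<in> carrier G \<Longrightarrow> \<not> s a b \<Longrightarrow> r b a"
  unfolding strict_def using rtotal rrefl by metis

lemma pow_step: assumes "g \<in> carrier G" "s \<one> g" shows "s (g [^] (n::nat)) (g [^] Suc n)"
proof -
  have "s (g [^] n \<otimes> \<one>) (g [^] n \<otimes> g)" by (rule sinv) (use assms in auto)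
  thus ?thesis using assms by simp
qed

lemma pow_pos: assumes "g \<in> carrier G" "s \<one> g" "(n::nat) \<ge> 1" shows "s \<one> (g [^] n)"
  using assms(3)
proof (induction n rule: dec_induct)
  case base then show ?case using assms by simp
next
  case (step n) then show ?case using assms pow_step[of g n] by (metis strans one_closed nat_pow_closed)
qed

lemma conj_pow: assumes "f \<in> carrier G" "g \<in> carrier G"
  shows "(f \<otimes> g \<otimes> inv f) [^] (n::nat) = f \<otimes> g [^] n \<otimes> inv f"
proof (induction n)
  case 0 then show ?case using assms by (simp add: r_inv)
next
  case (Suc n) then show ?case using assms by (simp add: m_assoc)
qed

lemma conj_pow': assumes "u \<in> carrier G" "g \<in> carrier G"
  shows "(inv u \<otimes> g \<otimes> u) [^] (n::nat) = inv u \<otimes> g [^] n \<otimes> u"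
  using conj_pow[of "inv u" g n] assms by simp

end

lemma (in lord) fwd:
  assumes c: "conradian G r" shows "\<not> admits_crossing G (carrier G) s (\<lambda>g h. g \<otimes> h)"
proof
  assume "admits_crossing G (carrier G) s (\<lambda>g h. g \<otimes> h)"
  then obtain f g u v w and M N :: nat where cr: "f \<in> carrier G" "g \<in> carrier G" "u \<in> carrier G" "v \<in> carrier G" "w \<in> carrier G"
    "s u w" "s w v" "\<And>n::nat. s (g [^] n \<otimes> u) v" "\<And>n::nat. s u (f [^] n \<otimes> v)"
    "s (f [^] N \<otimes> v) w" "s w (g [^] M \<otimes> u)"
    unfolding admits_crossing_def crossing_def by blast
  define F where "F = f [^] N"
  define H where "H = g [^] M"
  have FH: "F \<in> carrier G" "H \<in> carrier G" using cr F_def H_def by auto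
  define gg where "gg = inv u \<otimes> H \<otimes> u"
  define ff where "ff = inv u \<otimes> (F \<otimes> H \<otimes> u)"
  have c1: "gg \<in> carrier G" "ff \<in> carrier G" using FH cr gg_def ff_def by auto
  have "s u (H \<otimes> u)" using strans[OF _ _ _ cr(6) cr(11)] cr FH H_def by auto
  note prev = this
  have "s (inv u \<otimes> u) (inv u \<otimes> (H \<otimes> u))" by (rule sinv) (use prev cr FH in auto)
  hence pg: "s \<one> gg" using cr FH by (simp add: gg_def m_assoc)
  have "s (F \<otimes> v) (H \<otimes> u)" using strans[OF _ _ _ cr(10) cr(11)] cr FH F_def H_def by auto
  note prev = this
  have "s (F \<otimes> (F \<otimes> v)) (F \<otimes> (H \<otimes> u))" by (rule sinv) (use prev cr FH in auto)
  moreover have "F \<otimes> (F \<otimes> v) = f [^] (N + N) \<otimes> v" using cr by (simp add: F_def m_assoc[symmetric] nat_pow_mult)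
  ultimately have "s u (F \<otimes> (H \<otimes> u))" using strans cr(9)[of "N+N"] cr FH by (metis m_closed nat_pow_closed)
  note prev = this
  have "s (inv u \<otimes> u) (inv u \<otimes> (F \<otimes> (H \<otimes> u)))" by (rule sinv) (use prev cr FH in auto)
  hence pf: "s \<one> ff" using cr FH by (simp add: ff_def m_assoc)
  obtain n::nat where n: "s gg (ff \<otimes> gg [^] n)" using c c1 pg pf unfolding conradian_def by blast
  have "gg [^] n = inv u \<otimes> H [^] n \<otimes> u" unfolding gg_def using conj_pow'[of u H n] cr FH by simp
  hence "ff \<otimes> gg [^] n = inv u \<otimes> (F \<otimes> ((H \<otimes> H [^] n) \<otimes> u))"
    using cr FH by (simp add: ff_def m_assoc)
  also have "H \<otimes> H [^] n = H [^] Suc n" using FH nat_pow_Suc2[of H n] by simp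
  finally have "ff \<otimes> gg [^] n = inv u \<otimes> (F \<otimes> (H [^] Suc n \<otimes> u))" .
  moreover have "gg = inv u \<otimes> (H \<otimes> u)" using cr FH by (simp add: gg_def m_assoc)
  ultimately have B: "s (inv u \<otimes> (H \<otimes> u)) (inv u \<otimes> (F \<otimes> (H [^] Suc n \<otimes> u)))" using n by simp
  have A: "s (H \<otimes> u) (F \<otimes> (H [^] Suc n \<otimes> u))" by (rule scancel[OF _ _ _ B]) (use cr FH in auto)
  have "H [^] Suc n = g [^] (M * Suc n)" unfolding H_def using cr nat_pow_pow[of g M "Suc n"] by simp
  hence "s (H [^] Suc n \<otimes> u) v" using cr(8) by simp
  note prev = this
  have "s (F \<otimes> (H [^] Suc n \<otimes> u)) (F \<otimes> v)" by (rule sinv) (use prev cr FH in auto)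
  hence "s (F \<otimes> (H [^] Suc n \<otimes> u)) (H \<otimes> u)"
    using strans[OF _ _ _ _ \<open>s (F \<otimes> v) (H \<otimes> u)\<close>] cr FH by auto
  moreover have "H \<otimes> u \<in> carrier G" "F \<otimes> (H [^] Suc n \<otimes> u) \<in> carrier G" using cr FH by auto
  ultimately show False using A sasym by blast
qed

lemma (in lord) bwd:
  assumes nc: "\<not> conradian G r" shows "admits_crossing G (carrier G) s (\<lambda>g h. g \<otimes> h)"
proof -
  have "\<exists>f\<in>carrier G. \<exists>g\<in>carrier G. s \<one> f \<and> s \<one> g \<and> (\<forall>n::nat. n \<ge> 1 \<longrightarrow> \<not> s g (f \<otimes> g [^] n))"
    using nc unfolding conradian_def by simp
  then obtain f g where fg: "f \<in> carrier G" "g \<in> carrier G" "s \<one> f" "s \<one> g"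
    and h0: "\<forall>n::nat. n \<ge> 1 \<longrightarrow> \<not> s g (f \<otimes> g [^] n)"
    by auto
  have h: "\<not> s g (f \<otimes> g [^] n)" if "n \<ge> 1" for n :: nat using h0 that by simp
  have le: "r (f \<otimes> g [^] n) g" if "n \<ge> 1" for n :: nat using nots[OF _ _ h[OF that]] fg by auto
  have st: "s (f \<otimes> g [^] n) (f \<otimes> g [^] Suc n)" for n :: nat
    by (rule sinv) (use fg pow_step[of g n] in auto)
  have below: "s (f \<otimes> g [^] n) g" for n :: nat using srtrans[OF _ _ _ st le[of "Suc n"]] fg by auto
  have fltg: "s f g" using below[of 0] fg by simp
  define G' where "G' = f \<otimes> g \<otimes> inv f"
  have orb: "G' [^] n \<otimes> f = f \<otimes> g [^] n" for n :: nat
    unfolding G'_def conj_pow[OF fg(1,2)] using fg by (simp add: m_assoc)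
  have upper: "s f (f [^] n \<otimes> g)" for n :: nat
  proof (cases "n = 0")
    case True then show ?thesis using fltg fg by simp
  next
    case False
    have a: "s (f [^] n \<otimes> \<one>) (f [^] n \<otimes> g)" by (rule sinv) (use fg in auto)
    have "r f (f [^] n)"
    proof (cases "n = 1")
      case True then show ?thesis using fg rrefl by simp
    next
      case False
      with \<open>n \<noteq> 0\<close> have "s f (f [^] n)"
      proof -
        have "s \<one> (f [^] (n - 1))" using pow_pos[of f "n-1"] fg \<open>n \<noteq> 0\<close> False by auto
        note prev = this
        have "s (f \<otimes> \<one>) (f \<otimes> f [^] (n - 1))" by (rule sinv) (use prev fg in auto)
        moreover have "f \<otimes> f [^] (n - 1) = f [^] n" using fg nat_pow_Suc2[of f "n-1"] \<open>n \<noteq> 0\<close> by simp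
        ultimately show ?thesis using fg by simp
      qed
      then show ?thesis unfolding strict_def using fg by simp
    qed
    hence "r f (f [^] n \<otimes> \<one>)" using fg by simp
    thus ?thesis using rstrans[OF _ _ _ _ a] fg by auto
  qed
  have "crossing G (carrier G) s (\<lambda>g h. g \<otimes> h) f G' f g (f \<otimes> g [^] (2::nat))"
    unfolding crossing_def
  proof (intro conjI allI)
    show "f \<in> carrier G" "G' \<in> carrier G" "f \<in> carrier G" "g \<in> carrier G" "f \<otimes> g [^] (2::nat) \<in> carrier G"
      using fg G'_def by auto
    have "s (f \<otimes> \<one>) (f \<otimes> g [^] (2::nat))" by (rule sinv) (use fg pow_pos[of g 2] in auto)
    thus "s f (f \<otimes> g [^] (2::nat))" using fg by simp
    show "s (f \<otimes> g [^] (2::nat)) g" using below by blast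
    fix n :: nat
    show "s (G' [^] n \<otimes> f) g" using orb below by simp
    show "s f (f [^] n \<otimes> g)" using upper by blast
  next
    have "s (f [^] (1::nat) \<otimes> g) (f \<otimes> g [^] (2::nat))" using st[of 1] fg by (simp add: numeral_2_eq_2)
    moreover have "s (f \<otimes> g [^] (2::nat)) (G' [^] (3::nat) \<otimes> f)" using st[of 2] orb[of 3] fg
      by (simp add: numeral_2_eq_2 numeral_3_eq_3)
    ultimately show "\<exists>(M::nat) (N::nat). s (f [^] N \<otimes> g) (f \<otimes> g [^] (2::nat)) \<and> s (f \<otimes> g [^] (2::nat)) (G' [^] M \<otimes> f)"
      by blast
  qed
  thus ?thesis unfolding admits_crossing_def by blast
qed

theorem theoremA:
  fixes G (structure) and r :: "'a \<Rightarrow> 'a \<Rightarrow> bool"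
  assumes "group G" and "left_ordering G r"
  shows "conradian G r \<longleftrightarrow>
           \<not> admits_crossing G (carrier G) (strict r) (\<lambda>g h. g \<otimes>\<^bsub>G\<^esub> h)"
proof -
  interpret lord G r using assms by (simp add: lord_def lord_axioms_def)
  show ?thesis using fwd bwd by blast
qed

end
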